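(* Consider the control-affine system described in the context, with safe set $\mathcal{C}=\{x\in\mathbb{R}^{m+n}: h(x)\geq 0\}$. Suppose that: (i) Assumptions A, B and C (see context) hold; (ii) there exist positive constants $\gamma,\epsilon_1,\epsilon_2>0$ and $\gamma^\theta_i,\gamma^\lambda_i>0$, $i\in[n]$, such that for every $x\in\mathcal{C}$ the set $$K_{BF}(x)=\{\mathfrak{u}\in\mathbb{R}^n : \Psi_0(x)+\Psi_1(x)\mathfrak{u}\geq 0\}$$ is non-empty, where $$\Psi_0(x)=\mathcal{M}(x)+\sum_{i=1}^n h_{x_2,i}(x)\,\theta_i^{0\top}\varphi_i(x)-n(\epsilon_1+\epsilon_2)+\gamma\Big[h(x)-\sum_{i=1}^n\Big(\frac{\bar\mu_i^2}{2\gamma_i^\theta}+\frac{\bar\nu_i^2}{2\gamma_i^\lambda}\Big)\Big],$$ $$\Psi_1(x)=\big[h_{x_2,1}^2(g_1+\lambda_1^{0\top}\psi_1),\ h_{x_2,2}^2(g_2+\lambda_2^{0\top}\psi_2),\ \dots,\ h_{x_2,n}^2(g_n+\lambda_n^{0\top}\psi_n)\big]\in\mathbb{R}^{1\times n}$$ (all functions evaluated at $x$); (iii) for each $i\in[n]$, the scalar estimates $\hat\mu_i,\hat\nu_i$ evolve according to $$\dot{\hat\mu}_i=-\gamma\hat\mu_i+\gamma_i^\theta|h_{x_2,i}|\,\|\varphi_i\|,\qquad \dot{\hat\nu}_i=-\gamma\hat\nu_i+\gamma_i^\lambda h_{x_2,i}^2|u_{0,i}|\,\|\psi_i\|,$$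 with $\hat\mu_i(0)>0$, $\hat\nu_i(0)>0$, where $u_0=[u_{0,1},\dots,u_{0,n}]^\top$ is a Lipschitz function satisfying $u_0\in K_{BF}(x)$; (iv) $h(x(0))\geq \sum_{i=1}^n\Big(\frac{\hat\mu_i(0)^2+\bar\mu_i^2}{2\gamma_i^\theta}+\frac{\hat\nu_i(0)^2+\bar\nu_i^2}{2\gamma_i^\lambda}\Big)$. Then the control input $u=h_{x_2}^\top\odot s(u_0)\in\mathbb{R}^n$, where $s(u_0)=[s_1(u_{0,1}),\dots,s_n(u_{0,n})]^\top$ with $$s_i(u_{0,i})=u_{0,i}+\frac{\kappa_{1,i}}{b_i}+\frac{\kappa_{2,i}^2u_{0,i}^2}{b_i(\kappa_{2,i}|h_{x_2,i}||u_{0,i}|+\epsilon_2)},\quad \kappa_{1,i}=\frac{\hat\mu_i^2\|\varphi_i\|^2}{\hat\mu_i\|\varphi_i\||h_{x_2,i}|+\epsilon_1},\quad \kappa_{2,i}=\hat\nu_i\|\psi_i\||h_{x_2,i}|,$$ ensures $h(x(t))\geq 0$ for all $t>0$ along the closed-loop trajectory.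
   Context: Let $m\ge 0$, $n\ge 1$ be integers, $[n]=\{1,\dots,n\}$. The state is $x=(x_1,x_2)\in\mathbb{R}^{m+n}$, $x_1\in\mathbb{R}^m$, $x_2\in\mathbb{R}^n$, the input $u\in\mathbb{R}^n$, and the system is $$\dot x=f(x)+f_u(x)+\begin{pmatrix}0_m\\ f_\theta(x)\end{pmatrix}+\begin{pmatrix}0_{m\times n}\\ g(x)+g_\lambda(x)\end{pmatrix}u,$$ where $f:\mathbb{R}^{m+n}\to\mathbb{R}^{m+n}$ is a known Lipschitz function, $f_u:\mathbb{R}^{m+n}\to\mathbb{R}^{m+n}$ is an unknown Lipschitz function, $f_\theta(x)=[\theta_1^\top\varphi_1(x),\dots,\theta_n^\top\varphi_n(x)]^\top$, $g(x)=\mathrm{diag}(g_1(x),\dots,g_n(x))$, $g_\lambda(x)=\mathrm{diag}(\lambda_1^\top\psi_1(x),\dots,\lambda_n^\top\psi_n(x))$, with known functions $g_i:\mathbb{R}^{m+n}\to\mathbb{R}$, $\varphi_i:\mathbb{R}^{m+n}\to\mathbb{R}^{p_i}$, $\psi_i:\mathbb{R}^{m+n}\to\mathbb{R}^{q_i}$, and unknown constant parameter vectors $\theta_i\in\mathbb{R}^{p_i}$, $\lambda_i\in\mathbb{R}^{q_i}$. The function $h:\mathbb{R}^{m+n}\to\mathbb{R}$ is continuously differentiable; $h_x=\partial h/\partial x\in\mathbb{R}^{1\times(m+n)}$ and $h_{x_2}=\partial h/\partial x_2\in\mathbb{R}^{1\times n}$ are row vectors with entries $h_{x,j}$, $h_{x_2,i}$.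 Norms are Euclidean; $\odot$ is the entrywise (Hadamard) product; vector inequalities are entrywise. Assumption A: there are known functions $\underline f_u,\overline f_u:\mathbb{R}^{m+n}\to\mathbb{R}^{m+n}$ with $\underline f_u(x)\le f_u(x)\le\overline f_u(x)$ for all $x$; write $\underline f_{u,j},\overline f_{u,j}$ for their entries. Assumption B: for each $i\in[n]$ there are known vectors with $\underline\theta_i\le\theta_i\le\overline\theta_i$ and $\underline\lambda_i\le\lambda_i\le\overline\lambda_i$. Assumption C: for each $i\in[n]$ there is a constant $b_i>0$ such that $g_i(x)+\lambda_i^\top\psi_i(x)\geq b_i$ for all $x\in\mathcal{C}$. Fix nominal values $\theta_i^0,\lambda_i^0$ with $\underline\theta_i\le\theta_i^0\le\overline\theta_i$, $\underline\lambda_i\le\lambda_i^0\le\overline\lambda_i$, and set $\bar\mu_i=\sqrt{\sum_{j=1}^{p_i}\max\{((\overline\theta_i)_j-(\theta_i^0)_j)^2,((\underline\theta_i)_j-(\theta_i^0)_j)^2\}}$, $\bar\nu_i=\sqrt{\sum_{j=1}^{q_i}\max\{((\overline\lambda_i)_j-(\lambda_i^0)_j)^2,((\underline\lambda_i)_j-(\lambda_i^0)_j)^2\}}$ (so that $\|\theta_i-\theta_i^0\|\le\bar\mu_i$, $\|\lambda_i-\lambda_i^0\|\le\bar\nu_i$). Define $\mathcal{M}(x)=h_x(x)f(x)+\sum_{j=1}^{m+n}\min\{h_{x,j}(x)\underline f_{u,j}(x),\,h_{x,j}(x)\overline f_{u,j}(x)\}$. *)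

theory Defs
  imports "HOL-Analysis.Analysis"
begin

text \<open>Variable-length parameter vectors in R^p are represented as functions
  nat => real, of which only the entries 0..p-1 matter.\<close>

definition ip :: "nat \<Rightarrow> (nat \<Rightarrow> real) \<Rightarrow> (nat \<Rightarrow> real) \<Rightarrow> real" where
  "ip p a b = (\<Sum>j<p. a j * b j)"

definition vnorm :: "nat \<Rightarrow> (nat \<Rightarrow> real) \<Rightarrow> real" where
  "vnorm p a = sqrt (\<Sum>j<p. (a j)\<^sup>2)"

definition vle :: "nat \<Rightarrow> (nat \<Rightarrow> real) \<Rightarrow> (nat \<Rightarrow> real) \<Rightarrow> bool" where
  "vle p a b = (\<forall>j<p. a j \<le> b j)"

definition dev_bound :: "nat \<Rightarrow> (nat \<Rightarrow> real) \<Rightarrow> (nat \<Rightarrow> real) \<Rightarrow> (nat \<Rightarrow> real) \<Rightarrow> real" where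
  "dev_bound p lo hi c = sqrt (\<Sum>j<p. max ((hi j - c j)\<^sup>2) ((lo j - c j)\<^sup>2))"

text \<open>The state is x :: real^'d; the x_2 block is given by an injective
  index map e :: 'n => 'd (the remaining m = CARD('d) - CARD('n) coordinates form x_1).
  emb e v is the vector (0_m, v).\<close>
definition emb :: "('n \<Rightarrow> 'd) \<Rightarrow> ('n \<Rightarrow> real) \<Rightarrow> real^'d" where
  "emb e v = (\<chi> j. if j \<in> range e then v (inv e j) else 0)"

end

theory Submission
  imports Defs
begin

lemma frac_ge: fixes c e :: real assumes "c \<ge> 0" "e > 0" shows "c\<^sup>2 / (c + e) \<ge> c - e"
proof -
  have "(c - e) * (c + e) \<le> c\<^sup>2" by (simp add: power2_eq_square algebra_simps)
  thus ?thesis using assms by (simp add: field_simps)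
qed

lemma per_i:
  fixes a P Q tp t0 G G0 w mh nh ms ns mb nb gam gt gl e1 e2 b :: real
  assumes P: "P \<ge> 0" and Q: "Q \<ge> 0" and mh: "mh \<ge> 0" and nh: "nh \<ge> 0"
    and ms: "ms \<ge> 0" "ms \<le> mb" and ns: "ns \<ge> 0" "ns \<le> nb"
    and gam: "gam > 0" and gt: "gt > 0" and gl: "gl > 0" and e1: "e1 > 0" and e2: "e2 > 0"
    and b: "b > 0" and G: "G \<ge> b"
    and tp: "\<bar>tp - t0\<bar> \<le> ms * P" and Gd: "\<bar>G - G0\<bar> \<le> ns * Q"
  shows "a*tp + a*(G*(a*(w + (mh\<^sup>2 * P\<^sup>2 / (mh * P * \<bar>a\<bar> + e1)) / b
             + (nh * Q * \<bar>a\<bar>)\<^sup>2 * w\<^sup>2 / (b * ((nh * Q * \<bar>a\<bar>) * \<bar>a\<bar> * \<bar>w\<bar> + e2)))))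
     - ((mh - ms) / gt * (- gam * mh + gt * \<bar>a\<bar> * P)
        + (nh - ns) / gl * (- gam * nh + gl * a\<^sup>2 * \<bar>w\<bar> * Q))
   \<ge> a*t0 + a\<^sup>2 * G0 * w - e1 - e2 + gam * ((mh - ms)\<^sup>2 - mb\<^sup>2) / (2*gt)
     + gam * ((nh - ns)\<^sup>2 - nb\<^sup>2) / (2*gl)"
proof -
  define k1 where "k1 = mh\<^sup>2 * P\<^sup>2 / (mh * P * \<bar>a\<bar> + e1)"
  define k2 where "k2 = nh * Q * \<bar>a\<bar>"
  define r where "r = k1 / b + k2\<^sup>2 * w\<^sup>2 / (b * (k2 * \<bar>a\<bar> * \<bar>w\<bar> + e2))"
  have k1: "k1 \<ge> 0" unfolding k1_def using mh P e1 by (intro divide_nonneg_pos) (auto intro: add_nonneg_pos)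
  have k2: "k2 \<ge> 0" unfolding k2_def using nh Q by simp
  have den2: "k2 * \<bar>a\<bar> * \<bar>w\<bar> + e2 > 0" using k2 e2 by (intro add_nonneg_pos) auto
  have r0: "r \<ge> 0" unfolding r_def using k1 b den2 by (intro add_nonneg_nonneg divide_nonneg_pos) auto
  have s1: "a*tp \<ge> a*t0 - ms*\<bar>a\<bar>*P"
  proof -
    have "\<bar>a*tp - a*t0\<bar> \<le> \<bar>a\<bar> * (ms*P)" using tp by (simp add: abs_mult mult_left_mono flip: right_diff_distrib)
    thus ?thesis by (simp add: mult.assoc mult.left_commute)
  qed
  have s2: "a\<^sup>2 * G * r \<ge> a\<^sup>2 * b * r" using G r0 by (intro mult_right_mono mult_left_mono) auto
  have s3: "a\<^sup>2 * G * w \<ge> a\<^sup>2 * G0 * w - ns*Q*a\<^sup>2*\<bar>w\<bar>"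
  proof -
    have "\<bar>a\<^sup>2 * G * w - a\<^sup>2 * G0 * w\<bar> = a\<^sup>2 * \<bar>w\<bar> * \<bar>G - G0\<bar>"
      by (simp add: abs_mult flip: right_diff_distrib left_diff_distrib)
    also have "\<dots> \<le> a\<^sup>2 * \<bar>w\<bar> * (ns * Q)" using Gd by (intro mult_left_mono) auto
    finally show ?thesis by (simp add: algebra_simps)
  qed
  have s4a: "a\<^sup>2 * k1 \<ge> mh * P * \<bar>a\<bar> - e1"
  proof -
    have "a\<^sup>2 * k1 = (mh * P * \<bar>a\<bar>)\<^sup>2 / (mh * P * \<bar>a\<bar> + e1)" unfolding k1_def
      by (simp add: power_mult_distrib)
    also have "\<dots> \<ge> mh * P * \<bar>a\<bar> - e1" using mh P e1 by (intro frac_ge) auto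
    finally show ?thesis .
  qed
  have s4b: "a\<^sup>2 * (k2\<^sup>2 * w\<^sup>2 / (k2 * \<bar>a\<bar> * \<bar>w\<bar> + e2)) \<ge> nh * Q * a\<^sup>2 * \<bar>w\<bar> - e2"
  proof -
    have "a\<^sup>2 * (k2\<^sup>2 * w\<^sup>2 / (k2 * \<bar>a\<bar> * \<bar>w\<bar> + e2)) = (k2 * \<bar>a\<bar> * \<bar>w\<bar>)\<^sup>2 / (k2 * \<bar>a\<bar> * \<bar>w\<bar> + e2)"
      by (simp add: power_mult_distrib)
    also have "\<dots> \<ge> k2 * \<bar>a\<bar> * \<bar>w\<bar> - e2" using k2 e2 by (intro frac_ge) auto
    finally have "k2 * \<bar>a\<bar> * \<bar>w\<bar> - e2 \<le> a\<^sup>2 * (k2\<^sup>2 * w\<^sup>2 / (k2 * \<bar>a\<bar> * \<bar>w\<bar> + e2))" .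
    moreover have "k2 * \<bar>a\<bar> * \<bar>w\<bar> = nh * Q * a\<^sup>2 * \<bar>w\<bar>" unfolding k2_def by (simp add: power2_eq_square)
    ultimately show ?thesis by linarith
  qed
  have s4: "a\<^sup>2 * b * r \<ge> mh * P * \<bar>a\<bar> - e1 + nh * Q * a\<^sup>2 * \<bar>w\<bar> - e2"
  proof -
    have "a\<^sup>2 * b * r = a\<^sup>2 * k1 + a\<^sup>2 * (k2\<^sup>2 * w\<^sup>2 / (k2 * \<bar>a\<bar> * \<bar>w\<bar> + e2))"
    proof -
      have "r = (k1 + k2\<^sup>2 * w\<^sup>2 / (k2 * \<bar>a\<bar> * \<bar>w\<bar> + e2)) / b"
        unfolding r_def by (simp add: add_divide_distrib divide_divide_eq_left mult.commute)
      hence "b * r = k1 + k2\<^sup>2 * w\<^sup>2 / (k2 * \<bar>a\<bar> * \<bar>w\<bar> + e2)" using b by simp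
      thus ?thesis by (metis mult.assoc distrib_left)
    qed
    thus ?thesis using s4a s4b by linarith
  qed
  have s5: "gam * (mh - ms) * mh / gt \<ge> gam * ((mh - ms)\<^sup>2 - mb\<^sup>2) / (2*gt)"
  proof -
    have "ms\<^sup>2 \<le> mb\<^sup>2" using ms by (intro power_mono) auto
    hence "(mh - ms)\<^sup>2 - mb\<^sup>2 \<le> 2 * ((mh - ms) * mh)" by (simp add: power2_eq_square algebra_simps) (smt (verit) zero_le_square)
    hence "gam * ((mh - ms)\<^sup>2 - mb\<^sup>2) \<le> gam * (2 * ((mh - ms) * mh))" using gam by (intro mult_left_mono) auto
    hence "gam * ((mh - ms)\<^sup>2 - mb\<^sup>2) / (2*gt) \<le> gam * (2 * ((mh - ms) * mh)) / (2*gt)"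
      using gt by (intro divide_right_mono) auto
    thus ?thesis by (simp add: mult.assoc)
  qed
  have s6: "gam * (nh - ns) * nh / gl \<ge> gam * ((nh - ns)\<^sup>2 - nb\<^sup>2) / (2*gl)"
  proof -
    have "ns\<^sup>2 \<le> nb\<^sup>2" using ns by (intro power_mono) auto
    hence "(nh - ns)\<^sup>2 - nb\<^sup>2 \<le> 2 * ((nh - ns) * nh)" by (simp add: power2_eq_square algebra_simps) (smt (verit) zero_le_square)
    hence "gam * ((nh - ns)\<^sup>2 - nb\<^sup>2) \<le> gam * (2 * ((nh - ns) * nh))" using gam by (intro mult_left_mono) auto
    hence "gam * ((nh - ns)\<^sup>2 - nb\<^sup>2) / (2*gl) \<le> gam * (2 * ((nh - ns) * nh)) / (2*gl)"
      using gl by (intro divide_right_mono) auto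
    thus ?thesis by (simp add: mult.assoc)
  qed
  have ad: "(mh - ms) / gt * (- gam * mh + gt * \<bar>a\<bar> * P) + (nh - ns) / gl * (- gam * nh + gl * a\<^sup>2 * \<bar>w\<bar> * Q)
     = - (gam * (mh - ms) * mh / gt) + (mh - ms) * \<bar>a\<bar> * P - (gam * (nh - ns) * nh / gl) + (nh - ns) * a\<^sup>2 * \<bar>w\<bar> * Q"
    using gt gl by (simp add: field_simps)
  have lhs: "a*(G*(a*(w + k1 / b + k2\<^sup>2 * w\<^sup>2 / (b * (k2 * \<bar>a\<bar> * \<bar>w\<bar> + e2))))) = a\<^sup>2 * G * w + a\<^sup>2 * G * r"
    unfolding r_def by (simp add: power2_eq_square algebra_simps)
  have e1': "(mh - ms) * \<bar>a\<bar> * P = mh * P * \<bar>a\<bar> - ms * \<bar>a\<bar> * P" by (simp add: algebra_simps)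
  have e2': "(nh - ns) * a\<^sup>2 * \<bar>w\<bar> * Q = nh * Q * a\<^sup>2 * \<bar>w\<bar> - ns * Q * a\<^sup>2 * \<bar>w\<bar>" by (simp add: algebra_simps)
  show ?thesis unfolding k1_def[symmetric] k2_def[symmetric] lhs ad e1' e2'
    using s1 s2 s3 s4 s5 s6 by linarith
qed

lemma cs_ip: "\<bar>ip p a c - ip p b c\<bar> \<le> vnorm p (\<lambda>j. a j - b j) * vnorm p c"
proof -
  have "ip p a c - ip p b c = (\<Sum>j<p. (a j - b j) * c j)"
    unfolding ip_def by (simp add: sum_subtractf left_diff_distrib)
  also have "\<bar>\<dots>\<bar> \<le> (\<Sum>j<p. \<bar>a j - b j\<bar> * \<bar>c j\<bar>)"
    by (rule order_trans[OF sum_abs]) (simp add: abs_mult)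
  also have "\<dots> \<le> L2_set (\<lambda>j. a j - b j) {..<p} * L2_set c {..<p}" by (rule L2_set_mult_ineq)
  finally show ?thesis unfolding vnorm_def L2_set_def by simp
qed

lemma vnorm_nonneg: "vnorm p a \<ge> 0" unfolding vnorm_def by (simp add: sum_nonneg)


lemma dev_le:
  assumes "vle p lo th" "vle p th hi"
  shows "vnorm p (\<lambda>j. th j - c j) \<le> dev_bound p lo hi c"
  unfolding vnorm_def dev_bound_def
proof (rule real_sqrt_le_mono, rule sum_mono)
  fix j assume "j \<in> {..<p}"
  hence l: "lo j \<le> th j" and u: "th j \<le> hi j" using assms by (auto simp: vle_def)
  show "(th j - c j)\<^sup>2 \<le> max ((hi j - c j)\<^sup>2) ((lo j - c j)\<^sup>2)"
  proof (cases "th j \<ge> c j")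
    case True
    hence "(th j - c j)\<^sup>2 \<le> (hi j - c j)\<^sup>2" using u by (intro power_mono) auto
    thus ?thesis by simp
  next
    case False
    hence "(c j - th j)\<^sup>2 \<le> (c j - lo j)\<^sup>2" using l by (intro power_mono) auto
    thus ?thesis by (simp add: power2_commute)
  qed
qed

lemma dev_nonneg: "dev_bound p lo hi c \<ge> 0" unfolding dev_bound_def
  by (intro real_sqrt_ge_zero sum_nonneg) (auto simp: le_max_iff_disj)


lemma emb_inner:
  fixes e :: "'n::finite \<Rightarrow> 'd::finite"
  assumes "inj e"
  shows "D \<bullet> emb e v = (\<Sum>i\<in>UNIV. D $ e i * v i)"
proof -
  have "D \<bullet> emb e v = (\<Sum>j\<in>UNIV. D $ j * (if j \<in> range e then v (inv e j) else 0))"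
    unfolding inner_vec_def emb_def by simp
  also have "\<dots> = (\<Sum>j\<in>range e. D $ j * v (inv e j))"
  proof -
    have "(\<Sum>j\<in>UNIV. D $ j * (if j \<in> range e then v (inv e j) else 0))
       = (\<Sum>j\<in>UNIV. if j \<in> range e then D $ j * v (inv e j) else 0)"
      by (rule sum.cong) auto
    also have "\<dots> = (\<Sum>j\<in>range e. D $ j * v (inv e j))"
      by (simp add: sum.inter_restrict[symmetric])
    finally show ?thesis .
  qed
  also have "\<dots> = (\<Sum>i\<in>UNIV. D $ e i * v i)"
    using assms by (simp add: sum.reindex)
  finally show ?thesis .
qed


lemma fu_bound:
  fixes D lo hi u :: "real^'d::finite"
  assumes "\<And>j. lo $ j \<le> u $ j \<and> u $ j \<le> hi $ j"
  shows "(\<Sum>j\<in>UNIV. min (D $ j * lo $ j) (D $ j * hi $ j)) \<le> D \<bullet> u"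
  unfolding inner_vec_def inner_real_def
proof (rule sum_mono)
  fix j :: 'd assume "j \<in> UNIV"
  have a: "lo $ j \<le> u $ j" "u $ j \<le> hi $ j" using assms by auto
  show "min (D $ j * lo $ j) (D $ j * hi $ j) \<le> D $ j * u $ j"
  proof (cases "D $ j \<ge> 0")
    case True
    thus ?thesis using a mult_left_mono by (smt (verit))
  next
    case False
    hence "D $ j * hi $ j \<le> D $ j * u $ j" using a by (intro mult_left_mono_neg) auto
    thus ?thesis by simp
  qed
qed


lemma deriv_at_of_within:
  fixes f :: "real \<Rightarrow> real"
  assumes "(f has_real_derivative D) (at t within {0..})" "t > 0"
  shows "(f has_real_derivative D) (at t)"
proof -
  have "(f has_real_derivative D) (at t within {0<..})" using assms(1) by (rule DERIV_subset) auto
  moreover have "at t within {0<..} = at t" using assms(2) by (intro at_within_open) auto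
  ultimately show ?thesis by simp
qed



lemma mono_lemma:
  fixes f f' :: "real \<Rightarrow> real"
  assumes d: "\<And>t. t \<ge> 0 \<Longrightarrow> (f has_real_derivative f' t) (at t within {0..})"
    and T: "T \<ge> 0" and pos: "\<And>t. 0 < t \<Longrightarrow> t < T \<Longrightarrow> f' t \<ge> 0"
  shows "f 0 \<le> f T"
proof (rule DERIV_nonneg_imp_increasing_open[OF T])
  fix t assume "0 < t" "t < T"
  thus "\<exists>y. DERIV f t :> y \<and> 0 \<le> y" using d[of t] pos[of t] deriv_at_of_within by auto
next
  have "continuous_on {0..} f"
    unfolding continuous_on_eq_continuous_within using d by (auto intro: DERIV_continuous)
  thus "continuous_on {0..T} f" by (rule continuous_on_subset) auto
qed


theorem theorem1:
  fixes e :: "'n::finite \<Rightarrow> 'd::finite"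
    and f fu fu_lo fu_hi :: "real^'d \<Rightarrow> real^'d"
    and h :: "real^'d \<Rightarrow> real"
    and Dh :: "real^'d \<Rightarrow> real^'d"
    and g :: "'n \<Rightarrow> real^'d \<Rightarrow> real"
    and p q :: "'n \<Rightarrow> nat"
    and \<phi> :: "'n \<Rightarrow> real^'d \<Rightarrow> nat \<Rightarrow> real"
    and \<psi> :: "'n \<Rightarrow> real^'d \<Rightarrow> nat \<Rightarrow> real"
    and \<theta> \<theta>_lo \<theta>_hi \<theta>0 lam lam_lo lam_hi lam0 :: "'n \<Rightarrow> nat \<Rightarrow> real"
    and b :: "'n \<Rightarrow> real"
    and \<gamma> \<epsilon>1 \<epsilon>2 :: real
    and \<gamma>\<theta> \<gamma>lam :: "'n \<Rightarrow> real"
    and u0 :: "real^'d \<Rightarrow> ('n \<Rightarrow> real)"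
    and x :: "real \<Rightarrow> real^'d"
    and \<mu> \<nu> :: "real \<Rightarrow> 'n \<Rightarrow> real"
    and C :: "(real^'d) set"
    and \<mu>bar \<nu>bar :: "'n \<Rightarrow> real"
    and hx2 :: "'n \<Rightarrow> real^'d \<Rightarrow> real"
    and M \<Psi>0 :: "real^'d \<Rightarrow> real"
    and \<Psi>1 :: "real^'d \<Rightarrow> 'n \<Rightarrow> real"
    and K :: "real^'d \<Rightarrow> ('n \<Rightarrow> real) set"
    and s :: "real^'d \<Rightarrow> ('n \<Rightarrow> real) \<Rightarrow> ('n \<Rightarrow> real) \<Rightarrow> ('n \<Rightarrow> real) \<Rightarrow> 'n \<Rightarrow> real"
    and F :: "real^'d \<Rightarrow> ('n \<Rightarrow> real) \<Rightarrow> real^'d"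
  assumes inj_e: "inj e"
    \<comment> \<open>C = safe set\<close>
    and C_def: "C = {y. h y \<ge> 0}"
    \<comment> \<open>h continuously differentiable with gradient Dh, so h_x = Dh^T\<close>
    and h_deriv: "\<And>y. (h has_derivative (\<lambda>v. Dh y \<bullet> v)) (at y)"
    and Dh_cont: "continuous_on UNIV Dh"
    and hx2_def: "hx2 = (\<lambda>i y. Dh y $ e i)"
    \<comment> \<open>Lipschitz f (known), fu (unknown)\<close>
    and f_lip: "\<exists>L. L-lipschitz_on UNIV f"
    and fu_lip: "\<exists>L. L-lipschitz_on UNIV fu"
    \<comment> \<open>Assumption A\<close>
    and A: "\<And>y j. fu_lo y $ j \<le> fu y $ j \<and> fu y $ j \<le> fu_hi y $ j"
    \<comment> \<open>Assumption B\<close>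
    and B\<theta>: "\<And>i. vle (p i) (\<theta>_lo i) (\<theta> i) \<and> vle (p i) (\<theta> i) (\<theta>_hi i)"
    and Blam: "\<And>i. vle (q i) (lam_lo i) (lam i) \<and> vle (q i) (lam i) (lam_hi i)"
    \<comment> \<open>Assumption C\<close>
    and b_pos: "\<And>i. b i > 0"
    and AC: "\<And>i y. y \<in> C \<Longrightarrow> g i y + ip (q i) (lam i) (\<psi> i y) \<ge> b i"
    \<comment> \<open>nominal values\<close>
    and nom\<theta>: "\<And>i. vle (p i) (\<theta>_lo i) (\<theta>0 i) \<and> vle (p i) (\<theta>0 i) (\<theta>_hi i)"
    and nomlam: "\<And>i. vle (q i) (lam_lo i) (lam0 i) \<and> vle (q i) (lam0 i) (lam_hi i)"
    and \<mu>bar_def: "\<mu>bar = (\<lambda>i. dev_bound (p i) (\<theta>_lo i) (\<theta>_hi i) (\<theta>0 i))"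
    and \<nu>bar_def: "\<nu>bar = (\<lambda>i. dev_bound (q i) (lam_lo i) (lam_hi i) (lam0 i))"
    and M_def: "M = (\<lambda>y. Dh y \<bullet> f y
                   + (\<Sum>j\<in>UNIV. min (Dh y $ j * fu_lo y $ j) (Dh y $ j * fu_hi y $ j)))"
    \<comment> \<open>(ii)\<close>
    and pos: "\<gamma> > 0" "\<epsilon>1 > 0" "\<epsilon>2 > 0" "\<And>i. \<gamma>\<theta> i > 0" "\<And>i. \<gamma>lam i > 0"
    and \<Psi>0_def: "\<Psi>0 = (\<lambda>y. M y + (\<Sum>i\<in>UNIV. hx2 i y * ip (p i) (\<theta>0 i) (\<phi> i y))
                     - real CARD('n) * (\<epsilon>1 + \<epsilon>2)
                     + \<gamma> * (h y - (\<Sum>i\<in>UNIV. (\<mu>bar i)\<^sup>2 / (2 * \<gamma>\<theta> i)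
                                           + (\<nu>bar i)\<^sup>2 / (2 * \<gamma>lam i))))"
    and \<Psi>1_def: "\<Psi>1 = (\<lambda>y i. (hx2 i y)\<^sup>2 * (g i y + ip (q i) (lam0 i) (\<psi> i y)))"
    and K_def: "K = (\<lambda>y. {w. \<Psi>0 y + (\<Sum>i\<in>UNIV. \<Psi>1 y i * w i) \<ge> 0})"
    and K_ne: "\<And>y. y \<in> C \<Longrightarrow> K y \<noteq> {}"
    \<comment> \<open>(iii) u0 Lipschitz with u0 x in K_BF(x)\<close>
    and u0_lip: "\<exists>L. L-lipschitz_on UNIV (\<lambda>y. vec_lambda (u0 y))"
    and u0_K: "\<And>y. y \<in> C \<Longrightarrow> u0 y \<in> K y"
    \<comment> \<open>the controller s(u0), depending on state y and estimates mh, nh\<close>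
    and s_def: "s = (\<lambda>y w mh nh i.
        let \<kappa>1 = (mh i)\<^sup>2 * (vnorm (p i) (\<phi> i y))\<^sup>2
                   / (mh i * vnorm (p i) (\<phi> i y) * \<bar>hx2 i y\<bar> + \<epsilon>1);
            \<kappa>2 = nh i * vnorm (q i) (\<psi> i y) * \<bar>hx2 i y\<bar>
        in w i + \<kappa>1 / b i + \<kappa>2\<^sup>2 * (w i)\<^sup>2 / (b i * (\<kappa>2 * \<bar>hx2 i y\<bar> * \<bar>w i\<bar> + \<epsilon>2)))"
    \<comment> \<open>true (uncertain) dynamics with input u\<close>
    and F_def: "F = (\<lambda>y u. f y + fu y
        + emb e (\<lambda>i. ip (p i) (\<theta> i) (\<phi> i y)
                     + (g i y + ip (q i) (lam i) (\<psi> i y)) * u i))"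
    \<comment> \<open>closed-loop trajectory on [0,\<infinity>) with u = h_x2^T \<odot> s(u0)\<close>
    and x_ode: "\<And>t. t \<ge> 0 \<Longrightarrow>
        (x has_vector_derivative
           F (x t) (\<lambda>i. hx2 i (x t) * s (x t) (u0 (x t)) (\<mu> t) (\<nu> t) i)) (at t within {0..})"
    and \<mu>_ode: "\<And>t i. t \<ge> 0 \<Longrightarrow>
        ((\<lambda>\<tau>. \<mu> \<tau> i) has_real_derivative
           (- \<gamma> * \<mu> t i + \<gamma>\<theta> i * \<bar>hx2 i (x t)\<bar> * vnorm (p i) (\<phi> i (x t)))) (at t within {0..})"
    and \<nu>_ode: "\<And>t i. t \<ge> 0 \<Longrightarrow>
        ((\<lambda>\<tau>. \<nu> \<tau> i) has_real_derivative
           (- \<gamma> * \<nu> t i + \<gamma>lam i * (hx2 i (x t))\<^sup>2 * \<bar>u0 (x t) i\<bar> * vnorm (q i) (\<psi> i (x t))))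
           (at t within {0..})"
    and init_pos: "\<And>i. \<mu> 0 i > 0" "\<And>i. \<nu> 0 i > 0"
    \<comment> \<open>(iv)\<close>
    and init_h: "h (x 0) \<ge> (\<Sum>i\<in>UNIV. ((\<mu> 0 i)\<^sup>2 + (\<mu>bar i)\<^sup>2) / (2 * \<gamma>\<theta> i)
                                  + ((\<nu> 0 i)\<^sup>2 + (\<nu>bar i)\<^sup>2) / (2 * \<gamma>lam i))"
  shows "\<forall>t>0. h (x t) \<ge> 0"
  proof -
  define G where "G i y = g i y + ip (q i) (lam i) (\<psi> i y)" for i y
  define G0 where "G0 i y = g i y + ip (q i) (lam0 i) (\<psi> i y)" for i y
  define ms where "ms i = vnorm (p i) (\<lambda>j. \<theta> i j - \<theta>0 i j)" for i
  define ns where "ns i = vnorm (q i) (\<lambda>j. lam i j - lam0 i j)" for i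
  have ms0: "ms i \<ge> 0" for i by (simp add: ms_def vnorm_nonneg)
  have ns0: "ns i \<ge> 0" for i by (simp add: ns_def vnorm_nonneg)
  have msle: "ms i \<le> \<mu>bar i" for i using dev_le B\<theta> by (simp add: ms_def \<mu>bar_def)
  have nsle: "ns i \<le> \<nu>bar i" for i using dev_le Blam by (simp add: ns_def \<nu>bar_def)
  define U where "U t = (\<lambda>i. hx2 i (x t) * s (x t) (u0 (x t)) (\<mu> t) (\<nu> t) i)" for t
  define X where "X t = F (x t) (U t)" for t
  define md where "md t i = - \<gamma> * \<mu> t i + \<gamma>\<theta> i * \<bar>hx2 i (x t)\<bar> * vnorm (p i) (\<phi> i (x t))" for t i
  define nd where "nd t i = - \<gamma> * \<nu> t i + \<gamma>lam i * (hx2 i (x t))\<^sup>2 * \<bar>u0 (x t) i\<bar> * vnorm (q i) (\<psi> i (x t))" for t i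
  define SQ where "SQ t = (\<Sum>i\<in>UNIV. (\<mu> t i - ms i)\<^sup>2 / (2 * \<gamma>\<theta> i) + (\<nu> t i - ns i)\<^sup>2 / (2 * \<gamma>lam i))" for t
  define V where "V t = h (x t) - SQ t" for t
  define Vd where "Vd t = Dh (x t) \<bullet> X t - (\<Sum>i\<in>UNIV. (\<mu> t i - ms i) / \<gamma>\<theta> i * md t i + (\<nu> t i - ns i) / \<gamma>lam i * nd t i)" for t
  have hD: "((\<lambda>t. h (x t)) has_real_derivative Dh (x t) \<bullet> X t) (at t within {0..})" if t: "t \<ge> 0" for t
  proof -
    from x_ode[OF t] have "(x has_vector_derivative X t) (at t within {0..})" by (simp add: X_def U_def)
    then have "((h \<circ> x) has_vector_derivative (Dh (x t) \<bullet> X t)) (at t within {0..})"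
      by (rule vector_derivative_diff_chain_within) (rule has_derivative_at_withinI[OF h_deriv])
    thus ?thesis by (simp add: has_real_derivative_iff_has_vector_derivative o_def)
  qed
  have muD: "((\<lambda>t. \<mu> t i) has_real_derivative md t i) (at t within {0..})" if "t \<ge> 0" for t i
    using \<mu>_ode[OF that] by (simp add: md_def)
  have nuD: "((\<lambda>t. \<nu> t i) has_real_derivative nd t i) (at t within {0..})" if "t \<ge> 0" for t i
    using \<nu>_ode[OF that] by (simp add: nd_def)
  have VD: "(V has_real_derivative Vd t) (at t within {0..})" if t: "t \<ge> 0" for t
  proof -
    have "((\<lambda>t. (\<mu> t i - ms i)\<^sup>2 / (2 * \<gamma>\<theta> i) + (\<nu> t i - ns i)\<^sup>2 / (2 * \<gamma>lam i)) has_real_derivative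
       (\<mu> t i - ms i) / \<gamma>\<theta> i * md t i + (\<nu> t i - ns i) / \<gamma>lam i * nd t i) (at t within {0..})" for i
      using pos(4)[of i] pos(5)[of i] by (auto intro!: derivative_eq_intros muD[OF t] nuD[OF t] simp: field_simps)
    hence "(SQ has_real_derivative (\<Sum>i\<in>UNIV. (\<mu> t i - ms i) / \<gamma>\<theta> i * md t i + (\<nu> t i - ns i) / \<gamma>lam i * nd t i)) (at t within {0..})"
      unfolding SQ_def by (intro DERIV_sum) auto
    thus ?thesis unfolding V_def[abs_def] Vd_def using hD[OF t] by (intro derivative_eq_intros) auto
  qed
  have mupos: "\<mu> t i > 0" if "t \<ge> 0" for t i
  proof -
    have "exp (\<gamma> * 0) * \<mu> 0 i \<le> exp (\<gamma> * t) * \<mu> t i"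
    proof (rule mono_lemma[where f="\<lambda>t. exp (\<gamma> * t) * \<mu> t i", OF _ that])
      fix r :: real assume "r \<ge> 0"
      thus "((\<lambda>t. exp (\<gamma> * t) * \<mu> t i) has_real_derivative exp (\<gamma> * r) * (\<gamma>\<theta> i * \<bar>hx2 i (x r)\<bar> * vnorm (p i) (\<phi> i (x r)))) (at r within {0..})"
        by (auto intro!: derivative_eq_intros muD simp: md_def algebra_simps)
    next
      fix r :: real
      show "exp (\<gamma> * r) * (\<gamma>\<theta> i * \<bar>hx2 i (x r)\<bar> * vnorm (p i) (\<phi> i (x r))) \<ge> 0"
        using pos(4)[of i] by (intro mult_nonneg_nonneg) (auto simp: vnorm_nonneg less_imp_le)
    qed
    hence "0 < exp (\<gamma> * t) * \<mu> t i" using init_pos(1)[of i] by simp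
    thus ?thesis by (simp add: zero_less_mult_iff)
  qed
  have nupos: "\<nu> t i > 0" if "t \<ge> 0" for t i
  proof -
    have "exp (\<gamma> * 0) * \<nu> 0 i \<le> exp (\<gamma> * t) * \<nu> t i"
    proof (rule mono_lemma[where f="\<lambda>t. exp (\<gamma> * t) * \<nu> t i", OF _ that])
      fix r :: real assume "r \<ge> 0"
      thus "((\<lambda>t. exp (\<gamma> * t) * \<nu> t i) has_real_derivative exp (\<gamma> * r) * (\<gamma>lam i * (hx2 i (x r))\<^sup>2 * \<bar>u0 (x r) i\<bar> * vnorm (q i) (\<psi> i (x r)))) (at r within {0..})"
        by (auto intro!: derivative_eq_intros nuD simp: nd_def algebra_simps)
    next
      fix r :: real
      show "exp (\<gamma> * r) * (\<gamma>lam i * (hx2 i (x r))\<^sup>2 * \<bar>u0 (x r) i\<bar> * vnorm (q i) (\<psi> i (x r))) \<ge> 0"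
        using pos(5)[of i] by (intro mult_nonneg_nonneg) (auto simp: vnorm_nonneg less_imp_le)
    qed
    hence "0 < exp (\<gamma> * t) * \<nu> t i" using init_pos(2)[of i] by simp
    thus ?thesis by (simp add: zero_less_mult_iff)
  qed
  have key: "\<gamma> * V t + Vd t \<ge> 0" if t: "t \<ge> 0" and ht: "h (x t) \<ge> 0" for t
  proof -
    define y where "y = x t"
    define w where "w = u0 y"
    have yC: "y \<in> C" using C_def ht y_def by simp
    have Kw: "\<Psi>0 y + (\<Sum>i\<in>UNIV. \<Psi>1 y i * w i) \<ge> 0" using u0_K[OF yC] K_def w_def by simp
    have inner: "Dh y \<bullet> X t = Dh y \<bullet> f y + Dh y \<bullet> fu y
        + (\<Sum>i\<in>UNIV. hx2 i y * (ip (p i) (\<theta> i) (\<phi> i y) + G i y * U t i))"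
      unfolding X_def F_def y_def by (simp add: inner_add_right emb_inner[OF inj_e] hx2_def G_def)
    have Mle: "M y \<le> Dh y \<bullet> f y + Dh y \<bullet> fu y" using fu_bound[OF A, of "Dh y" y] M_def
      by (simp add: inner_add_right)
    define RHS where "RHS i = hx2 i y * ip (p i) (\<theta>0 i) (\<phi> i y) + \<Psi>1 y i * w i - \<epsilon>1 - \<epsilon>2
       + \<gamma> * ((\<mu> t i - ms i)\<^sup>2 - (\<mu>bar i)\<^sup>2) / (2 * \<gamma>\<theta> i) + \<gamma> * ((\<nu> t i - ns i)\<^sup>2 - (\<nu>bar i)\<^sup>2) / (2 * \<gamma>lam i)" for i
    have per: "hx2 i y * (ip (p i) (\<theta> i) (\<phi> i y) + G i y * U t i)
       - ((\<mu> t i - ms i) / \<gamma>\<theta> i * md t i + (\<nu> t i - ns i) / \<gamma>lam i * nd t i) \<ge> RHS i" for i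
    proof -
      have tp: "\<bar>ip (p i) (\<theta> i) (\<phi> i y) - ip (p i) (\<theta>0 i) (\<phi> i y)\<bar> \<le> ms i * vnorm (p i) (\<phi> i y)"
        unfolding ms_def by (rule cs_ip)
      have Gd: "\<bar>G i y - G0 i y\<bar> \<le> ns i * vnorm (q i) (\<psi> i y)"
        unfolding ns_def G_def G0_def using cs_ip[of "q i" "lam i" "\<psi> i y" "lam0 i"] by simp
      have GB: "G i y \<ge> b i" using AC[OF yC] G_def by simp
      note P = per_i[OF vnorm_nonneg vnorm_nonneg less_imp_le[OF mupos[OF t]] less_imp_le[OF nupos[OF t]]
          ms0 msle ns0 nsle pos(1) pos(4) pos(5) pos(2) pos(3) b_pos GB tp Gd, of "hx2 i y" "w i"]
      show ?thesis using P unfolding RHS_def U_def md_def nd_def s_def Let_def \<Psi>1_def G0_def y_def w_def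
        by (simp add: distrib_left)
    qed
    have RHSeq: "RHS i = hx2 i y * ip (p i) (\<theta>0 i) (\<phi> i y) + \<Psi>1 y i * w i - (\<epsilon>1 + \<epsilon>2)
       + \<gamma> * ((\<mu> t i - ms i)\<^sup>2 / (2 * \<gamma>\<theta> i) + (\<nu> t i - ns i)\<^sup>2 / (2 * \<gamma>lam i))
       - \<gamma> * ((\<mu>bar i)\<^sup>2 / (2 * \<gamma>\<theta> i) + (\<nu>bar i)\<^sup>2 / (2 * \<gamma>lam i))" for i
      unfolding RHS_def by (simp add: diff_divide_distrib algebra_simps)
    have sumR: "(\<Sum>i\<in>UNIV. RHS i) = (\<Sum>i\<in>UNIV. hx2 i y * ip (p i) (\<theta>0 i) (\<phi> i y)) + (\<Sum>i\<in>UNIV. \<Psi>1 y i * w i)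
       - real CARD('n) * (\<epsilon>1 + \<epsilon>2) + \<gamma> * SQ t
       - \<gamma> * (\<Sum>i\<in>UNIV. (\<mu>bar i)\<^sup>2 / (2 * \<gamma>\<theta> i) + (\<nu>bar i)\<^sup>2 / (2 * \<gamma>lam i))"
    proof -
      have "(\<Sum>i\<in>UNIV. RHS i) = (\<Sum>i\<in>UNIV. hx2 i y * ip (p i) (\<theta>0 i) (\<phi> i y)) + (\<Sum>i\<in>UNIV. \<Psi>1 y i * w i)
        - (\<Sum>i\<in>(UNIV::'n set). \<epsilon>1 + \<epsilon>2)
        + (\<Sum>i\<in>UNIV. \<gamma> * ((\<mu> t i - ms i)\<^sup>2 / (2 * \<gamma>\<theta> i) + (\<nu> t i - ns i)\<^sup>2 / (2 * \<gamma>lam i)))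
        - (\<Sum>i\<in>UNIV. \<gamma> * ((\<mu>bar i)\<^sup>2 / (2 * \<gamma>\<theta> i) + (\<nu>bar i)\<^sup>2 / (2 * \<gamma>lam i)))"
        unfolding RHSeq by (simp only: sum.distrib sum_subtractf)
      moreover have "(\<Sum>i\<in>UNIV. \<gamma> * ((\<mu> t i - ms i)\<^sup>2 / (2 * \<gamma>\<theta> i) + (\<nu> t i - ns i)\<^sup>2 / (2 * \<gamma>lam i))) = \<gamma> * SQ t"
        unfolding SQ_def by (simp only: sum_distrib_left)
      moreover have "(\<Sum>i\<in>UNIV. \<gamma> * ((\<mu>bar i)\<^sup>2 / (2 * \<gamma>\<theta> i) + (\<nu>bar i)\<^sup>2 / (2 * \<gamma>lam i)))
          = \<gamma> * (\<Sum>i\<in>UNIV. (\<mu>bar i)\<^sup>2 / (2 * \<gamma>\<theta> i) + (\<nu>bar i)\<^sup>2 / (2 * \<gamma>lam i))"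
        by (simp only: sum_distrib_left)
      moreover have "(\<Sum>i\<in>(UNIV::'n set). \<epsilon>1 + \<epsilon>2) = real CARD('n) * (\<epsilon>1 + \<epsilon>2)" by simp
      ultimately show ?thesis by simp
    qed
    have sumP: "(\<Sum>i\<in>UNIV. RHS i) \<le> (\<Sum>i\<in>UNIV. hx2 i y * (ip (p i) (\<theta> i) (\<phi> i y) + G i y * U t i))
       - (\<Sum>i\<in>UNIV. (\<mu> t i - ms i) / \<gamma>\<theta> i * md t i + (\<nu> t i - ns i) / \<gamma>lam i * nd t i)"
      using sum_mono[of UNIV RHS, OF per] by (simp add: sum_subtractf)
    have "\<gamma> * V t + Vd t = \<gamma> * h y - \<gamma> * SQ t + Dh y \<bullet> X t
       - (\<Sum>i\<in>UNIV. (\<mu> t i - ms i) / \<gamma>\<theta> i * md t i + (\<nu> t i - ns i) / \<gamma>lam i * nd t i)"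
      unfolding V_def Vd_def y_def by (simp add: algebra_simps)
    also have "\<dots> \<ge> \<Psi>0 y + (\<Sum>i\<in>UNIV. \<Psi>1 y i * w i)"
      using inner Mle sumP sumR unfolding \<Psi>0_def by (simp add: algebra_simps)
    finally show ?thesis using Kw by linarith
  qed
  show ?thesis
  proof (rule ccontr)
    assume "\<not> (\<forall>t>0. h (x t) \<ge> 0)"
    then obtain t where t: "t > 0" "h (x t) < 0" by auto
    have SQ0: "SQ r \<ge> 0" for r unfolding SQ_def using pos(4,5) by (intro sum_nonneg add_nonneg_nonneg divide_nonneg_pos) auto
    define Di where "Di i = ((\<mu> 0 i)\<^sup>2 + (\<mu>bar i)\<^sup>2 - (\<mu> 0 i - ms i)\<^sup>2) / (2 * \<gamma>\<theta> i)
       + ((\<nu> 0 i)\<^sup>2 + (\<nu>bar i)\<^sup>2 - (\<nu> 0 i - ns i)\<^sup>2) / (2 * \<gamma>lam i)" for i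
    have V0: "V 0 \<ge> (\<Sum>i\<in>UNIV. Di i)"
    proof -
      have "(\<Sum>i\<in>UNIV. Di i) = (\<Sum>i\<in>UNIV. ((\<mu> 0 i)\<^sup>2 + (\<mu>bar i)\<^sup>2) / (2 * \<gamma>\<theta> i)
                                  + ((\<nu> 0 i)\<^sup>2 + (\<nu>bar i)\<^sup>2) / (2 * \<gamma>lam i)) - SQ 0"
        unfolding Di_def SQ_def by (simp add: diff_divide_distrib sum_subtractf sum.distrib algebra_simps)
      thus ?thesis using init_h unfolding V_def by linarith
    qed
    have Di_ge: "Di i \<ge> \<mu> 0 i * ms i / \<gamma>\<theta> i" for i
    proof -
      have a: "(\<mu> 0 i)\<^sup>2 + (\<mu>bar i)\<^sup>2 - (\<mu> 0 i - ms i)\<^sup>2 \<ge> 2 * (\<mu> 0 i * ms i)"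
      proof -
        have "(ms i)\<^sup>2 \<le> (\<mu>bar i)\<^sup>2" using ms0 msle by (intro power_mono) auto
        thus ?thesis by (simp add: power2_eq_square algebra_simps)
      qed
      have b: "(\<nu> 0 i)\<^sup>2 + (\<nu>bar i)\<^sup>2 - (\<nu> 0 i - ns i)\<^sup>2 \<ge> 0"
      proof -
        have "(ns i)\<^sup>2 \<le> (\<nu>bar i)\<^sup>2" using ns0 nsle by (intro power_mono) auto
        moreover have "\<nu> 0 i * ns i \<ge> 0" using init_pos(2)[of i] ns0[of i] by simp
        ultimately show ?thesis by (simp add: power2_eq_square algebra_simps)
      qed
      have "((\<mu> 0 i)\<^sup>2 + (\<mu>bar i)\<^sup>2 - (\<mu> 0 i - ms i)\<^sup>2) / (2 * \<gamma>\<theta> i) \<ge> 2 * (\<mu> 0 i * ms i) / (2 * \<gamma>\<theta> i)"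
        using a pos(4)[of i] by (intro divide_right_mono) auto
      moreover have "((\<nu> 0 i)\<^sup>2 + (\<nu>bar i)\<^sup>2 - (\<nu> 0 i - ns i)\<^sup>2) / (2 * \<gamma>lam i) \<ge> 0"
        using b pos(5)[of i] by simp
      ultimately show ?thesis unfolding Di_def by simp
    qed
    have Di0: "Di i \<ge> 0" for i
      using Di_ge[of i] init_pos(1)[of i] ms0[of i] pos(4)[of i] by (smt (verit) divide_nonneg_pos mult_nonneg_nonneg)
    have hx0: "h (x 0) > 0"
    proof -
      have "0 < (\<Sum>i\<in>UNIV. ((\<mu> 0 i)\<^sup>2 + (\<mu>bar i)\<^sup>2) / (2 * \<gamma>\<theta> i)
                                  + ((\<nu> 0 i)\<^sup>2 + (\<nu>bar i)\<^sup>2) / (2 * \<gamma>lam i))"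
        using init_pos pos(4,5) by (intro sum_pos add_pos_nonneg divide_pos_pos divide_nonneg_pos) (auto, metis less_irrefl)
      thus ?thesis using init_h by linarith
    qed
    have hcont: "continuous_on {0..} (\<lambda>t. h (x t))"
      unfolding continuous_on_eq_continuous_within using hD by (auto intro: DERIV_continuous)
    define S where "S = {0..t} \<inter> (\<lambda>t. h (x t)) -` {..0}"
    have clS: "closed S" unfolding S_def
      by (rule continuous_closed_preimage) (auto intro: continuous_on_subset[OF hcont])
    have tS: "t \<in> S" using t by (simp add: S_def)
    define t2 where "t2 = Inf S"
    have bdd: "bdd_below S" unfolding S_def by (rule bdd_belowI[of _ 0]) auto
    have t2S: "t2 \<in> S" unfolding t2_def using clS tS bdd by (intro closed_contains_Inf) auto
    have t2ge: "t2 \<ge> 0" and ht2: "h (x t2) \<le> 0" using t2S by (auto simp: S_def)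
    have t2pos: "t2 > 0" using t2ge ht2 hx0 by (cases "t2 = 0") auto
    have before: "h (x r) > 0" if "0 \<le> r" "r < t2" for r
    proof (rule ccontr)
      assume "\<not> h (x r) > 0"
      hence "r \<in> S" using that t2S by (auto simp: S_def)
      hence "t2 \<le> r" unfolding t2_def using bdd by (rule cInf_lower)
      thus False using that by simp
    qed
    have mono: "exp (\<gamma> * 0) * V 0 \<le> exp (\<gamma> * t2) * V t2"
    proof (rule mono_lemma[where f="\<lambda>r. exp (\<gamma> * r) * V r" and f'="\<lambda>r. exp (\<gamma> * r) * (\<gamma> * V r + Vd r)"])
      fix r :: real assume "r \<ge> 0"
      thus "((\<lambda>r. exp (\<gamma> * r) * V r) has_real_derivative exp (\<gamma> * r) * (\<gamma> * V r + Vd r)) (at r within {0..})"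
        by (auto intro!: derivative_eq_intros VD simp: algebra_simps)
    next
      show "t2 \<ge> 0" by fact
    next
      fix r :: real assume "0 < r" "r < t2"
      hence "\<gamma> * V r + Vd r \<ge> 0" using key before by (simp add: less_imp_le)
      thus "exp (\<gamma> * r) * (\<gamma> * V r + Vd r) \<ge> 0" by simp
    qed
    have Vt2: "exp (\<gamma> * t2) * V t2 \<ge> (\<Sum>i\<in>UNIV. Di i)" using mono V0 by simp
    have sumD0: "(\<Sum>i\<in>UNIV. Di i) \<ge> 0" using Di0 by (simp add: sum_nonneg)
    obtain i0 :: 'n where True by simp
    show False
    proof (cases "ms i0 > 0")
      case True
      have "Di i0 > 0" using Di_ge[of i0] init_pos(1)[of i0] True pos(4)[of i0]
        by (smt (verit) divide_pos_pos mult_pos_pos)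
      moreover have "Di i0 \<le> (\<Sum>i\<in>UNIV. Di i)" using Di0 by (intro member_le_sum) auto
      ultimately have "exp (\<gamma> * t2) * V t2 > 0" using Vt2 by linarith
      hence "V t2 > 0" by (simp add: zero_less_mult_iff)
      thus False using ht2 SQ0[of t2] unfolding V_def by linarith
    next
      case False
      hence ms: "ms i0 = 0" using ms0[of i0] by simp
      have "exp (\<gamma> * t2) * V t2 \<ge> 0" using Vt2 sumD0 by linarith
      hence V: "V t2 \<ge> 0" by (simp add: zero_le_mult_iff)
      have "(\<mu> t2 i0 - ms i0)\<^sup>2 / (2 * \<gamma>\<theta> i0) > 0" using ms mupos[OF t2ge, of i0] pos(4)[of i0] by simp
      moreover have "(\<mu> t2 i0 - ms i0)\<^sup>2 / (2 * \<gamma>\<theta> i0) \<le> SQ t2"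
      proof -
        have "(\<mu> t2 i0 - ms i0)\<^sup>2 / (2 * \<gamma>\<theta> i0) \<le> (\<mu> t2 i0 - ms i0)\<^sup>2 / (2 * \<gamma>\<theta> i0) + (\<nu> t2 i0 - ns i0)\<^sup>2 / (2 * \<gamma>lam i0)"
          using pos(5)[of i0] by simp
        also have "\<dots> \<le> SQ t2" unfolding SQ_def using pos(4,5)
          by (intro member_le_sum add_nonneg_nonneg divide_nonneg_pos) auto
        finally show ?thesis .
      qed
      ultimately show False using V ht2 unfolding V_def by linarith
    qed
  qed
qed


end
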